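(* Let $\Lambda=(\lambda_i)_{i=0}^\infty$ be a strictly increasing sequence of non-negative reals with $\lambda_0=0$, $\lambda_1\geq 1$ and $\sum_{i=1}^\infty 1/\lambda_i<\infty$, and let $M(\Lambda)=\overline{\operatorname{span}}\{t^{\lambda_i}: i\geq 0\}\subseteq C[0,1]$ with the sup-norm. Then $M(\Lambda)$ is not locally almost square.
   Context: $C[0,1]$ is the space of real-valued continuous functions on $[0,1]$ with the sup-norm. A Banach space $X$ with closed unit ball $B_X$ and unit sphere $S_X$ is locally almost square if for every $x\in S_X$ there exists a sequence $(y_n)$ in $B_X$ such that $\|y_n\|\to 1$ and $\|x\pm y_n\|\to 1$. *)

theory Defs
  imports "HOL-Analysis.Analysis"
begin

text \<open>Elements of C[0,1] are represented as functions real \<Rightarrow> real continuous on {0..1};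
  only their values on {0..1} matter (sup-norm over {0..1}).\<close>

definition supnorm01 :: "(real \<Rightarrow> real) \<Rightarrow> real" where
  "supnorm01 f = (SUP t\<in>{0..1}. \<bar>f t\<bar>)"

text \<open>The monomial t^l on [0,1], with the convention t^0 = 1 (also at t = 0).\<close>
definition mon :: "real \<Rightarrow> real \<Rightarrow> real" where
  "mon l t = (if l = 0 then 1 else t powr l)"

definition muntz_space :: "(nat \<Rightarrow> real) \<Rightarrow> (real \<Rightarrow> real) set" where
  "muntz_space lam = {f. continuous_on {0..1} f \<and>
     (\<forall>e>0. \<exists>n c. supnorm01 (\<lambda>t. f t - (\<Sum>i<n. c i * mon (lam i) t)) < e)}"

definition locally_almost_square :: "(real \<Rightarrow> real) set \<Rightarrow> bool" where
  "locally_almost_square X \<longleftrightarrow>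
     (\<forall>x\<in>X. supnorm01 x = 1 \<longrightarrow>
        (\<exists>y :: nat \<Rightarrow> real \<Rightarrow> real.
            (\<forall>n. y n \<in> X \<and> supnorm01 (y n) \<le> 1) \<and>
            (\<lambda>n. supnorm01 (y n)) \<longlonglongrightarrow> 1 \<and>
            (\<lambda>n. supnorm01 (\<lambda>t. x t + y n t)) \<longlonglongrightarrow> 1 \<and>
            (\<lambda>n. supnorm01 (\<lambda>t. x t - y n t)) \<longlonglongrightarrow> 1))"

end

theory Submission
  imports Defs
begin

lemma bdd_cont:
  fixes f :: "real \<Rightarrow> real"
  assumes "continuous_on {0..1} f"
  shows "bdd_above ((\<lambda>t. \<bar>f t\<bar>) ` {0..(1::real)})"
proof -
  have "continuous_on {0..1} (\<lambda>t. \<bar>f t\<bar>)"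
    using assms by (rule continuous_on_rabs)
  then have "compact ((\<lambda>t. \<bar>f t\<bar>) ` {0..(1::real)})"
    by (intro compact_continuous_image) auto
  then show ?thesis by (intro bounded_imp_bdd_above compact_imp_bounded)
qed

lemma sup_le:
  assumes "\<And>t. t \<in> {0..1} \<Longrightarrow> \<bar>f t\<bar> \<le> B"
  shows "supnorm01 f \<le> B"
  unfolding supnorm01_def using assms by (intro cSUP_least) auto

lemma sup_ge:
  fixes f :: "real \<Rightarrow> real"
  assumes "continuous_on {0..1} f" "t \<in> {0..1}"
  shows "\<bar>f t\<bar> \<le> supnorm01 f"
  unfolding supnorm01_def using assms bdd_cont[OF assms(1)] by (intro cSUP_upper) auto

lemma key:
  fixes g :: "real \<Rightarrow> real"
  assumes "continuous_on {0..1} g"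
  shows "supnorm01 g \<le> max (supnorm01 (\<lambda>t. 1 + g t)) (supnorm01 (\<lambda>t. 1 - g t)) - 1"
proof (rule sup_le)
  fix t :: real assume t: "t \<in> {0..1}"
  have c1: "continuous_on {0..1} (\<lambda>t. 1 + g t)" using assms by (auto intro!: continuous_intros)
  have c2: "continuous_on {0..1} (\<lambda>t. 1 - g t)" using assms by (auto intro!: continuous_intros)
  have "\<bar>1 + g t\<bar> \<le> supnorm01 (\<lambda>t. 1 + g t)" using sup_ge[OF c1 t] by simp
  moreover have "\<bar>1 - g t\<bar> \<le> supnorm01 (\<lambda>t. 1 - g t)" using sup_ge[OF c2 t] by simp
  ultimately show "\<bar>g t\<bar> \<le> max (supnorm01 (\<lambda>t. 1 + g t)) (supnorm01 (\<lambda>t. 1 - g t)) - 1"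
    by linarith
qed

theorem mainTheorem4:
  fixes lam :: "nat \<Rightarrow> real"
  assumes "strict_mono lam"
    and "\<forall>i. lam i \<ge> 0"
    and "lam 0 = 0"
    and "lam 1 \<ge> 1"
    and "summable (\<lambda>i. 1 / lam (Suc i))"
  shows "\<not> locally_almost_square (muntz_space lam)"
proof
  assume las: "locally_almost_square (muntz_space lam)"
  have one_in: "(\<lambda>t. 1) \<in> muntz_space lam"
  proof -
    have "supnorm01 (\<lambda>t. 1 - (\<Sum>i<1. (\<lambda>_. 1) i * mon (lam i) t)) = 0"
      using assms(3) by (simp add: mon_def supnorm01_def)
    then show ?thesis unfolding muntz_space_def
      by (auto intro!: exI[of _ 1] exI[of _ "\<lambda>_. 1"])
  qed
  have n1: "supnorm01 (\<lambda>t. 1) = 1" by (simp add: supnorm01_def)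
  obtain y :: "nat \<Rightarrow> real \<Rightarrow> real" where
    y: "\<forall>n. y n \<in> muntz_space lam \<and> supnorm01 (y n) \<le> 1"
      "(\<lambda>n. supnorm01 (y n)) \<longlonglongrightarrow> 1"
      "(\<lambda>n. supnorm01 (\<lambda>t. 1 + y n t)) \<longlonglongrightarrow> 1"
      "(\<lambda>n. supnorm01 (\<lambda>t. 1 - y n t)) \<longlonglongrightarrow> 1"
    using las one_in n1 unfolding locally_almost_square_def by fastforce
  have le: "supnorm01 (y n) \<le> max (supnorm01 (\<lambda>t. 1 + y n t)) (supnorm01 (\<lambda>t. 1 - y n t)) - 1" for n
    using y(1) by (intro key) (auto simp: muntz_space_def)
  have "(\<lambda>n. max (supnorm01 (\<lambda>t. 1 + y n t)) (supnorm01 (\<lambda>t. 1 - y n t)) - 1) \<longlonglongrightarrow> max 1 1 - 1"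
    by (intro tendsto_intros y(3) y(4))
  then have "(1::real) \<le> max 1 1 - 1"
    using y(2) le by (intro LIMSEQ_le) auto
  then show False by simp
qed

end
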